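(* Assume $n\ge 3$. Let $|\Psi^{\mathrm h}_0\rangle$ and $|\Psi^{\mathrm c}_0\rangle$ be initial states with $p^{\mathrm h}_0(0)>0$, $p^{\mathrm c}_0(0)>0$, and $D_I^{\mathrm h}(0)>D_I^{\mathrm c}(0)$. Define $r^{\mathrm h}=\frac{p^{\mathrm h}_1(0)}{p^{\mathrm h}_0(0)}$, $r^{\mathrm c}=\frac{p^{\mathrm c}_1(0)}{p^{\mathrm c}_0(0)}$, $s^{\mathrm h}=\frac{1-p^{\mathrm h}_0(0)}{p^{\mathrm h}_0(0)}$. If $r^{\mathrm h}<r^{\mathrm c}$ and $\epsilon>0$ satisfies $$\epsilon<\left(1+\frac{1}{r^{\mathrm c}}\left(\frac{s^{\mathrm h}-r^{\mathrm h}}{r^{\mathrm c}-r^{\mathrm h}}\right)^{\frac{E_1}{E_2-E_1}}\right)^{-1},$$ then the Mpemba effect with respect to $D_I$ occurs before the threshold $\epsilon$, i.e. there exists $\tau^\star>0$ such that $D_I^{\mathrm h}(\tau^\star)=D_I^{\mathrm c}(\tau^\star)>\epsilon$ and $D_I^{\mathrm h}(\tau)<D_I^{\mathrm c}(\tau)$ for all $\tau>\tau^\star$.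
   Context: Let $H$ be a Hamiltonian on an $n$-dimensional Hilbert space with nondegenerate eigenvalues $0=E_0<E_1<\dots<E_{n-1}$ and orthonormal eigenvectors $|E_0\rangle,\dots,|E_{n-1}\rangle$. For a pure initial state $|\Psi_0\rangle$ and real $\tau$, QITE is $|\Psi(\tau)\rangle=e^{-H\tau}|\Psi_0\rangle/\sqrt{\langle\Psi_0|e^{-2H\tau}|\Psi_0\rangle}$, with populations $p_i(\tau)=|\langle E_i|\Psi(\tau)\rangle|^2=p_i(0)e^{-2E_i\tau}/\sum_{j}p_j(0)e^{-2E_j\tau}$. The ground-state infidelity is $D_I(\tau)=1-p_0(\tau)$. Superscripts $\mathrm h$ and $\mathrm c$ denote quantities for the QITE trajectories starting from $|\Psi^{\mathrm h}_0\rangle$ and $|\Psi^{\mathrm c}_0\rangle$ respectively. *)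

theory Defs
  imports "HOL-Analysis.Analysis"
begin

text \<open>We work in the (orthonormal) energy eigenbasis |E_0>,...,|E_(n-1)> of H.
  A pure state is given by its coordinates psi i = <E_i|Psi_0> (i < n), a unit vector
  in C^n.  H acts diagonally with eigenvalues E i, so e^(-H tau) multiplies the
  i-th coordinate by exp(-E i * tau).\<close>

definition unit_state :: "nat \<Rightarrow> (nat \<Rightarrow> complex) \<Rightarrow> bool" where
  "unit_state n psi \<longleftrightarrow> (\<Sum>i<n. (cmod (psi i))\<^sup>2) = 1"

definition spectrum_ok :: "nat \<Rightarrow> (nat \<Rightarrow> real) \<Rightarrow> bool" where
  "spectrum_ok n E \<longleftrightarrow> E 0 = 0 \<and> (\<forall>i j. i < j \<and> j < n \<longrightarrow> E i < E j)"

text \<open>QITE state coordinates: e^(-H tau)|Psi_0> / sqrt(<Psi_0|e^(-2H tau)|Psi_0>).\<close>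
definition qite_state :: "nat \<Rightarrow> (nat \<Rightarrow> real) \<Rightarrow> (nat \<Rightarrow> complex) \<Rightarrow> real \<Rightarrow> nat \<Rightarrow> complex" where
  "qite_state n E psi tau i =
     complex_of_real (exp (- E i * tau)) * psi i /
     complex_of_real (sqrt (\<Sum>j<n. exp (- 2 * E j * tau) * (cmod (psi j))\<^sup>2))"

definition pop :: "nat \<Rightarrow> (nat \<Rightarrow> real) \<Rightarrow> (nat \<Rightarrow> complex) \<Rightarrow> real \<Rightarrow> nat \<Rightarrow> real" where
  "pop n E psi tau i = (cmod (qite_state n E psi tau i))\<^sup>2"

definition infid :: "nat \<Rightarrow> (nat \<Rightarrow> real) \<Rightarrow> (nat \<Rightarrow> complex) \<Rightarrow> real \<Rightarrow> real" where
  "infid n E psi tau = 1 - pop n E psi tau 0"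

end

theory Submission
  imports Defs
begin

lemma pop_zero: "unit_state n psi \<Longrightarrow> pop n E psi 0 i = (cmod (psi i))\<^sup>2"
  unfolding pop_def qite_state_def unit_state_def by (simp add: norm_divide norm_mult)

lemma pop_t0:
  assumes "E 0 = 0"
  shows "pop n E psi t 0 = (cmod (psi 0))\<^sup>2 / (\<Sum>j<n. exp (- 2 * E j * t) * (cmod (psi j))\<^sup>2)"
proof -
  have nn: "0 \<le> (\<Sum>j<n. exp (- 2 * E j * t) * (cmod (psi j))\<^sup>2)"
    by (intro sum_nonneg) auto
  show ?thesis unfolding pop_def qite_state_def using assms nn
    by (simp add: norm_divide power_divide)
qed

lemma sum_split3: "3 \<le> (n::nat) \<Longrightarrow> (\<Sum>j<n. g j) = g 0 + g 1 + (\<Sum>j=2..<n. (g j::real))"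
  by (simp add: lessThan_atLeast0 sum.atLeast_Suc_lessThan numeral_2_eq_2)

lemma aux:
  fixes w y :: real
  assumes "w \<ge> 0" "y \<ge> 1 + w"
  shows "w / (1 + w) \<le> 1 - 1 / y"
proof -
  have "1 / y \<le> 1 / (1 + w)" using assms by (intro divide_left_mono) auto
  moreover have "w / (1 + w) = 1 - 1 / (1 + w)" using assms by (simp add: field_simps)
  ultimately show ?thesis by linarith
qed

theorem theorem2:
  fixes n :: nat and E :: "nat \<Rightarrow> real" and psih psic :: "nat \<Rightarrow> complex" and eps :: real
  assumes n3: "n \<ge> 3"
    and spec: "spectrum_ok n E"
    and uh: "unit_state n psih" and uc: "unit_state n psic"
    and p0h: "pop n E psih 0 0 > 0" and p0c: "pop n E psic 0 0 > 0"
    and Dhc: "infid n E psih 0 > infid n E psic 0"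
    and rr: "pop n E psih 0 1 / pop n E psih 0 0 < pop n E psic 0 1 / pop n E psic 0 0"
    and eps_pos: "eps > 0"
    and eps_bound:
      "eps < inverse (1 + (1 / (pop n E psic 0 1 / pop n E psic 0 0)) *
              (((1 - pop n E psih 0 0) / pop n E psih 0 0 - pop n E psih 0 1 / pop n E psih 0 0) /
               (pop n E psic 0 1 / pop n E psic 0 0 - pop n E psih 0 1 / pop n E psih 0 0))
              powr (E 1 / (E 2 - E 1)))"
  shows "\<exists>tstar > 0. infid n E psih tstar = infid n E psic tstar \<and> infid n E psic tstar > eps \<and>
           (\<forall>tau > tstar. infid n E psih tau < infid n E psic tau)"
proof -
  define a where "a j = (cmod (psih j))\<^sup>2" for j
  define b where "b j = (cmod (psic j))\<^sup>2" for j
  define Zh where "Zh t = (\<Sum>j<n. exp (- 2 * E j * t) * a j)" for t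
  define Zc where "Zc t = (\<Sum>j<n. exp (- 2 * E j * t) * b j)" for t
  have E0: "E 0 = 0" using spec unfolding spectrum_ok_def by auto
  have mono: "\<And>i j. i < j \<Longrightarrow> j < n \<Longrightarrow> E i < E j"
    using spec unfolding spectrum_ok_def by blast
  have E01: "E 0 < E 1" using mono[of 0 1] n3 by simp
  have E12: "E 1 < E 2" using mono[of 1 2] n3 by simp
  have E2j: "E 2 \<le> E j" if "2 \<le> j" "j < n" for j
  proof (cases "j = 2")
    case False then show ?thesis using mono[of 2 j] that by simp
  qed simp
  have ph: "pop n E psih 0 i = a i" for i using pop_zero[OF uh] a_def by simp
  have pc: "pop n E psic 0 i = b i" for i using pop_zero[OF uc] b_def by simp
  have a0: "a 0 > 0" using p0h ph by simp
  have b0: "b 0 > 0" using p0c pc by simp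
  have ann: "a j \<ge> 0" for j by (simp add: a_def)
  have bnn: "b j \<ge> 0" for j by (simp add: b_def)
  have asum: "(\<Sum>j<n. a j) = 1" using uh unfolding unit_state_def a_def by simp
  have ih: "infid n E psih t = 1 - a 0 / Zh t" for t
    unfolding infid_def pop_t0[where E=E, OF E0] Zh_def a_def by simp
  have ic: "infid n E psic t = 1 - b 0 / Zc t" for t
    unfolding infid_def pop_t0[where E=E, OF E0] Zc_def b_def by simp
  have Zhs: "Zh t = a 0 + exp (- 2 * E 1 * t) * a 1 + (\<Sum>j=2..<n. exp (- 2 * E j * t) * a j)" for t
    unfolding Zh_def using sum_split3[OF n3] E0 by simp
  have Zcs: "Zc t = b 0 + exp (- 2 * E 1 * t) * b 1 + (\<Sum>j=2..<n. exp (- 2 * E j * t) * b j)" for t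
    unfolding Zc_def using sum_split3[OF n3] E0 by simp
  have Rh0: "(\<Sum>j=2..<n. exp (- 2 * E j * t) * a j) \<ge> 0" for t
    by (intro sum_nonneg) (simp add: ann)
  have Rc0: "(\<Sum>j=2..<n. exp (- 2 * E j * t) * b j) \<ge> 0" for t
    by (intro sum_nonneg) (simp add: bnn)
  have arest: "(\<Sum>j=2..<n. a j) = 1 - a 0 - a 1"
    using asum sum_split3[OF n3, of a] by simp
  have Rh1: "(\<Sum>j=2..<n. exp (- 2 * E j * t) * a j) \<le> exp (- 2 * E 2 * t) * (1 - a 0 - a 1)"
    if "t \<ge> 0" for t
  proof -
    have "(\<Sum>j=2..<n. exp (- 2 * E j * t) * a j) \<le> (\<Sum>j=2..<n. exp (- 2 * E 2 * t) * a j)"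
      using that E2j ann by (intro sum_mono mult_right_mono) (auto simp: mult_right_mono)
    also have "\<dots> = exp (- 2 * E 2 * t) * (1 - a 0 - a 1)"
      by (simp add: sum_distrib_left[symmetric] arest)
    finally show ?thesis .
  qed
  have Zhpos: "Zh t > 0" for t using Zhs[of t] Rh0[of t] a0 ann[of 1]
    by (smt (verit) exp_gt_zero mult_nonneg_nonneg)
  have Zcpos: "Zc t > 0" for t using Zcs[of t] Rc0[of t] b0 bnn[of 1]
    by (smt (verit) exp_gt_zero mult_nonneg_nonneg)
  define G where "G t = Zh t / a 0 - Zc t / b 0" for t
  have contG: "continuous_on UNIV G"
    unfolding G_def Zh_def Zc_def using a0 b0 by (intro continuous_intros) auto
  have cmp: "infid n E psih t < infid n E psic t \<longleftrightarrow> G t < 0" for t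
  proof -
    have "infid n E psih t < infid n E psic t \<longleftrightarrow> b 0 / Zc t < a 0 / Zh t"
      using ih ic by auto
    also have "\<dots> \<longleftrightarrow> b 0 * Zh t < a 0 * Zc t"
      using Zhpos[of t] Zcpos[of t] by (simp add: divide_simps)
    also have "\<dots> \<longleftrightarrow> G t < 0"
      using a0 b0 unfolding G_def by (simp add: divide_simps mult.commute)
    finally show ?thesis .
  qed
  have eqv: "infid n E psih t = infid n E psic t \<longleftrightarrow> G t = 0" for t
  proof -
    have "infid n E psih t = infid n E psic t \<longleftrightarrow> b 0 / Zc t = a 0 / Zh t"
      using ih ic by auto
    also have "\<dots> \<longleftrightarrow> b 0 * Zh t = a 0 * Zc t"
      using Zhpos[of t] Zcpos[of t] by (simp add: divide_simps)
    also have "\<dots> \<longleftrightarrow> G t = 0"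
      using a0 b0 unfolding G_def by (simp add: divide_simps mult.commute)
    finally show ?thesis .
  qed
  have G0: "G 0 > 0"
  proof -
    have "Zh 0 = 1" "Zc 0 = 1" unfolding Zh_def Zc_def using asum uc
      by (simp_all add: b_def unit_state_def)
    moreover have "a 0 < b 0" using Dhc unfolding infid_def using ph pc by simp
    ultimately show ?thesis unfolding G_def using a0 b0 by (simp add: divide_simps)
  qed
  define rh where "rh = a 1 / a 0"
  define rc where "rc = b 1 / b 0"
  define sh where "sh = (1 - a 0) / a 0"
  define X where "X = (sh - rh) / (rc - rh)"
  have rhc: "rh < rc" using rr ph pc rh_def rc_def by simp
  have rh0: "rh \<ge> 0" using ann a0 rh_def by simp
  have key: "(rc - rh) * exp (- 2 * E 1 * t) \<le> (sh - rh) * exp (- 2 * E 2 * t)"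
    if "t \<ge> 0" "G t \<ge> 0" for t
  proof -
    have "Zh t \<le> a 0 + exp (- 2 * E 1 * t) * a 1 + exp (- 2 * E 2 * t) * (1 - a 0 - a 1)"
      using Zhs[of t] Rh1[OF that(1)] by simp
    hence h1: "Zh t / a 0 \<le> 1 + exp (- 2 * E 1 * t) * rh + exp (- 2 * E 2 * t) * (sh - rh)"
      using a0 unfolding rh_def sh_def by (simp add: divide_simps; simp add: algebra_simps)
    have "Zc t \<ge> b 0 + exp (- 2 * E 1 * t) * b 1" using Zcs[of t] Rc0[of t] by simp
    hence h2: "Zc t / b 0 \<ge> 1 + exp (- 2 * E 1 * t) * rc"
      using b0 unfolding rc_def by (simp add: divide_simps; simp add: algebra_simps)
    show ?thesis using h1 h2 that(2) unfolding G_def by (simp add: algebra_simps)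
  qed
  have keyX: "exp (2 * (E 2 - E 1) * t) \<le> X" if "t \<ge> 0" "G t \<ge> 0" for t
  proof -
    have k: "(rc - rh) * exp (- 2 * E 1 * t) \<le> (sh - rh) * exp (- 2 * E 2 * t)"
      using key[OF that] .
    have "exp (- 2 * E 1 * t) = exp (2 * (E 2 - E 1) * t) * exp (- 2 * E 2 * t)"
      by (simp add: exp_add[symmetric] algebra_simps)
    with k have "(rc - rh) * exp (2 * (E 2 - E 1) * t) \<le> (sh - rh)"
      by (simp add: mult.assoc[symmetric])
    thus ?thesis using rhc unfolding X_def by (simp add: divide_simps mult.commute)
  qed
  define S where "S = {t. 0 \<le> t \<and> 0 \<le> G t}"
  have S_eq: "S = {t. 0 \<le> t} \<inter> {t. 0 \<le> G t}" unfolding S_def by auto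
  have closedS: "closed S" unfolding S_eq
    by (intro closed_Int closed_Collect_le continuous_intros contG)
  have 0: "0 \<in> S" using G0 S_def by simp
  have bdd: "bdd_above S"
  proof (rule bdd_aboveI)
    fix t assume "t \<in> S"
    hence t: "t \<ge> 0" "G t \<ge> 0" by (auto simp: S_def)
    have "1 + 2 * (E 2 - E 1) * t \<le> exp (2 * (E 2 - E 1) * t)" by (rule exp_ge_add_one_self)
    also have "\<dots> \<le> X" using keyX[OF t] .
    finally have "2 * (E 2 - E 1) * t \<le> X - 1" by simp
    thus "t \<le> (X - 1) / (2 * (E 2 - E 1))" using E12 by (simp add: divide_simps mult.commute)
  qed
  define ts where "ts = Sup S"
  have tsS: "ts \<in> S" unfolding ts_def using closed_contains_Sup[OF _ bdd closedS] 0 by blast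
  have after: "G t < 0" if "t > ts" for t
  proof (rule ccontr)
    assume "\<not> G t < 0"
    hence "t \<in> S" using that tsS by (auto simp: S_def)
    hence "t \<le> ts" unfolding ts_def using bdd by (rule cSup_upper)
    with that show False by simp
  qed
  have Gts: "G ts = 0"
  proof (rule ccontr)
    assume "G ts \<noteq> 0"
    hence pos: "G ts > 0" using tsS S_def by auto
    have op: "open {t. (\<lambda>_. 0::real) t < G t}"
      by (rule open_Collect_less[OF continuous_on_const contG])
    have "ts \<in> {t. (\<lambda>_. 0::real) t < G t}" using pos by simp
    then obtain e where e: "e > 0" "ball ts e \<subseteq> {t. (\<lambda>_. 0::real) t < G t}"
      using op open_contains_ball by blast
    have "ts + e / 2 \<in> ball ts e" using e by (simp add: dist_real_def)
    hence "G (ts + e/2) > 0" using e(2) by blast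
    moreover have "G (ts + e/2) < 0" using after e by simp
    ultimately show False by simp
  qed
  have tspos: "ts > 0" using tsS Gts G0 S_def by (cases "ts = 0") auto
  have Xge: "exp (2 * (E 2 - E 1) * ts) \<le> X" using keyX[of ts] tspos Gts by simp
  have Xpos: "X > 0" using Xge by (smt (verit) exp_gt_zero)
  have rcpos: "rc > 0" using rh0 rhc by simp
  define al where "al = E 1 / (E 2 - E 1)"
  have alnn: "al \<ge> 0" using E01 E12 E0 al_def by simp
  have "exp (2 * E 1 * ts) = exp (2 * (E 2 - E 1) * ts) powr al"
    using E12 by (simp add: powr_def al_def field_simps)
  also have "\<dots> \<le> X powr al" using Xge alnn by (intro powr_mono2) auto
  finally have XA: "exp (2 * E 1 * ts) \<le> X powr al" .
  have epsb: "eps < inverse (1 + (1 / rc) * X powr al)"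
    using eps_bound unfolding ph pc X_def sh_def rh_def rc_def al_def .
  also have "\<dots> \<le> inverse (1 + (1 / rc) * exp (2 * E 1 * ts))"
    using XA rcpos by (intro le_imp_inverse_le add_left_mono mult_left_mono) (auto intro: add_pos_nonneg)
  also have "\<dots> = exp (- 2 * E 1 * ts) * rc / (1 + exp (- 2 * E 1 * ts) * rc)"
  proof -
    define p where "p = exp (2 * E 1 * ts)"
    define q where "q = exp (- 2 * E 1 * ts)"
    have pq: "q * p = 1" unfolding p_def q_def by (simp add: exp_add[symmetric])
    have pp: "p > 0" "q > 0" unfolding p_def q_def by simp_all
    have "inverse (1 + 1 / rc * p) = rc / (rc + p)" using rcpos by (simp add: field_simps)
    also have "\<dots> = (rc * q) / ((rc + p) * q)" using pp by simp
    also have "\<dots> = q * rc / (1 + q * rc)" using pq by (simp add: algebra_simps)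
    finally show ?thesis unfolding p_def q_def .
  qed
  also have "\<dots> \<le> infid n E psic ts"
  proof -
    have "Zc ts \<ge> b 0 + exp (- 2 * E 1 * ts) * b 1" using Zcs[of ts] Rc0[of ts] by simp
    hence "Zc ts / b 0 \<ge> 1 + exp (- 2 * E 1 * ts) * rc"
      using b0 unfolding rc_def by (simp add: divide_simps; simp add: algebra_simps)
    moreover have "infid n E psic ts = 1 - 1 / (Zc ts / b 0)" using ic by simp
    moreover have "exp (- 2 * E 1 * ts) * rc \<ge> 0" using rcpos by simp
    ultimately show ?thesis using aux by (metis mult.commute)
  qed
  finally have epsc: "eps < infid n E psic ts" .
  show ?thesis
  proof (intro exI[of _ ts] conjI allI impI)
    show "0 < ts" by (rule tspos)
    show "infid n E psih ts = infid n E psic ts" using eqv[of ts] Gts by simp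
    show "eps < infid n E psic ts" by (rule epsc)
    fix tau :: real assume "ts < tau"
    thus "infid n E psih tau < infid n E psic tau" using cmp[of tau] after[of tau] by simp
  qed
qed

end
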